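(* Let $G$ be a digraph and let $r_1,r_2$ be positive integers with $r_1+r_2\ge \Delta_{max}(G)\ge 1$. If $(V_1,V_2)$ is an $(r_1,r_2)$-normal partition of $V(G)$, then $G[V_1]$ is $r_1$-special and $G[V_2]$ is $r_2$-special.
   Context: Digraphs have no loops and no parallel arcs, but may contain digons. $d_{min}(v)=\min(d^+(v),d^-(v))$, $d_{max}(v)=\max(d^+(v),d^-(v))$, $\Delta_{max}(G)=\max_v d_{max}(v)$. A digraph $H$ is $r$-special if for every vertex $v$ of $H$, either $d_{min}(v)<r$ or $d^+(v)=d^-(v)=r$ (degrees in $H$). For positive integers $r_1,r_2$, a partition $(V_1,V_2)$ of $V(G)$ is $(r_1,r_2)$-normal if it minimizes $r_2|A(G[V_1])|+r_1|A(G[V_2])|$ over all partitions of $V(G)$ into two parts, where $A(\cdot)$ denotes the arc set. *)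

theory Defs
  imports Main
begin

text \<open>A digraph is given by a finite vertex set V and an arc set A of ordered pairs
  (so no parallel arcs), with A \<subseteq> V \<times> V and no loops. Digons (both (u,v) and (v,u))
  are allowed.\<close>

definition digraph :: "'a set \<Rightarrow> ('a \<times> 'a) set \<Rightarrow> bool" where
  "digraph V A \<longleftrightarrow> finite V \<and> A \<subseteq> V \<times> V \<and> (\<forall>v. (v, v) \<notin> A)"

definition induced_arcs :: "('a \<times> 'a) set \<Rightarrow> 'a set \<Rightarrow> ('a \<times> 'a) set" where
  "induced_arcs A S = {(u, w). (u, w) \<in> A \<and> u \<in> S \<and> w \<in> S}"

definition out_deg :: "('a \<times> 'a) set \<Rightarrow> 'a \<Rightarrow> nat" where
  "out_deg A v = card {w. (v, w) \<in> A}"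

definition in_deg :: "('a \<times> 'a) set \<Rightarrow> 'a \<Rightarrow> nat" where
  "in_deg A v = card {u. (u, v) \<in> A}"

definition d_min :: "('a \<times> 'a) set \<Rightarrow> 'a \<Rightarrow> nat" where
  "d_min A v = min (out_deg A v) (in_deg A v)"

definition d_max :: "('a \<times> 'a) set \<Rightarrow> 'a \<Rightarrow> nat" where
  "d_max A v = max (out_deg A v) (in_deg A v)"

definition Delta_max :: "'a set \<Rightarrow> ('a \<times> 'a) set \<Rightarrow> nat" where
  "Delta_max V A = Max (insert 0 (d_max A ` V))"

definition r_special :: "nat \<Rightarrow> 'a set \<Rightarrow> ('a \<times> 'a) set \<Rightarrow> bool" where
  "r_special r W B \<longleftrightarrow>
     (\<forall>v\<in>W. d_min B v < r \<or> (out_deg B v = r \<and> in_deg B v = r))"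

definition normal_partition ::
  "nat \<Rightarrow> nat \<Rightarrow> 'a set \<Rightarrow> ('a \<times> 'a) set \<Rightarrow> 'a set \<Rightarrow> 'a set \<Rightarrow> bool" where
  "normal_partition r1 r2 V A V1 V2 \<longleftrightarrow>
     V1 \<union> V2 = V \<and> V1 \<inter> V2 = {} \<and>
     (\<forall>U1 U2. U1 \<union> U2 = V \<and> U1 \<inter> U2 = {} \<longrightarrow>
        r2 * card (induced_arcs A V1) + r1 * card (induced_arcs A V2)
        \<le> r2 * card (induced_arcs A U1) + r1 * card (induced_arcs A U2))"

end

theory Submission
  imports Defs
begin

lemma fin_A: "digraph V A \<Longrightarrow> finite A"
  unfolding digraph_def by (meson finite_SigmaI finite_subset)

lemma card_split:
  assumes d: "digraph V A" and v: "v \<in> S"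
  shows "card (induced_arcs A S) = card (induced_arcs A (S - {v}))
     + out_deg (induced_arcs A S) v + in_deg (induced_arcs A S) v"
proof -
  have fA: "finite A" using fin_A[OF d] .
  have nl: "\<And>x. (x,x) \<notin> A" using d unfolding digraph_def by auto
  define Os where "Os = {w. (v, w) \<in> induced_arcs A S}"
  define I where "I = {u. (u, v) \<in> induced_arcs A S}"
  have fOs: "finite Os" unfolding Os_def
    by (rule finite_subset[of _ "snd ` A"]) (auto simp: induced_arcs_def fA intro: rev_image_eqI)
  have fI: "finite I" unfolding I_def
    by (rule finite_subset[of _ "fst ` A"]) (auto simp: induced_arcs_def fA intro: rev_image_eqI)
  have fR: "finite (induced_arcs A (S - {v}))"
    by (rule finite_subset[OF _ fA]) (auto simp: induced_arcs_def)
  have eq: "induced_arcs A S = (induced_arcs A (S - {v}) \<union> Pair v ` Os) \<union> (\<lambda>u. (u, v)) ` I"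
    unfolding Os_def I_def induced_arcs_def using v by auto
  have c1: "card (induced_arcs A (S - {v}) \<union> Pair v ` Os) = card (induced_arcs A (S - {v})) + card (Pair v ` Os)"
    by (rule card_Un_disjoint) (use fR fOs in \<open>auto simp: induced_arcs_def\<close>)
  have c2: "card ((induced_arcs A (S - {v}) \<union> Pair v ` Os) \<union> (\<lambda>u. (u, v)) ` I)
      = card (induced_arcs A (S - {v}) \<union> Pair v ` Os) + card ((\<lambda>u. (u, v)) ` I)"
    by (rule card_Un_disjoint) (use fR fOs fI nl in \<open>auto simp: induced_arcs_def Os_def I_def\<close>)
  have "card (Pair v ` Os) = card Os" by (rule card_image) (auto simp: inj_on_def)
  moreover have "card ((\<lambda>u. (u, v)) ` I) = card I" by (rule card_image) (auto simp: inj_on_def)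
  ultimately show ?thesis using eq c1 c2 unfolding out_deg_def in_deg_def Os_def I_def by simp
qed

lemma deg_bound:
  assumes d: "digraph V A" and v: "v \<in> V" and XY: "X \<inter> Y = {}" and vY: "v \<notin> Y"
  shows "out_deg (induced_arcs A X) v + out_deg (induced_arcs A (insert v Y)) v \<le> Delta_max V A"
    and "in_deg (induced_arcs A X) v + in_deg (induced_arcs A (insert v Y)) v \<le> Delta_max V A"
proof -
  have fA: "finite A" using fin_A[OF d] .
  have fV: "finite V" using d unfolding digraph_def by auto
  have nl: "\<And>x. (x,x) \<notin> A" using d unfolding digraph_def by auto
  have Dm: "d_max A v \<le> Delta_max V A" unfolding Delta_max_def
    using fV v by (intro Max_ge) auto
  have fOs: "finite {w. (v, w) \<in> A}"
    by (rule finite_subset[of _ "snd ` A"]) (auto simp: fA intro: rev_image_eqI)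
  have fI: "finite {w. (w, v) \<in> A}"
    by (rule finite_subset[of _ "fst ` A"]) (auto simp: fA intro: rev_image_eqI)
  have "card {w. (v, w) \<in> induced_arcs A X} + card {w. (v, w) \<in> induced_arcs A (insert v Y)}
      = card ({w. (v, w) \<in> induced_arcs A X} \<union> {w. (v, w) \<in> induced_arcs A (insert v Y)})"
    by (rule card_Un_disjoint[symmetric]) (use fOs XY nl in \<open>auto simp: induced_arcs_def intro: finite_subset\<close>)
  also have "\<dots> \<le> card {w. (v, w) \<in> A}"
    by (rule card_mono[OF fOs]) (auto simp: induced_arcs_def)
  finally show "out_deg (induced_arcs A X) v + out_deg (induced_arcs A (insert v Y)) v \<le> Delta_max V A"
    using Dm unfolding out_deg_def d_max_def by simp
  have "card {w. (w, v) \<in> induced_arcs A X} + card {w. (w, v) \<in> induced_arcs A (insert v Y)}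
      = card ({w. (w, v) \<in> induced_arcs A X} \<union> {w. (w, v) \<in> induced_arcs A (insert v Y)})"
    by (rule card_Un_disjoint[symmetric]) (use fI XY nl in \<open>auto simp: induced_arcs_def intro: finite_subset\<close>)
  also have "\<dots> \<le> card {w. (w, v) \<in> A}"
    by (rule card_mono[OF fI]) (auto simp: induced_arcs_def)
  finally show "in_deg (induced_arcs A X) v + in_deg (induced_arcs A (insert v Y)) v \<le> Delta_max V A"
    using Dm unfolding in_deg_def d_max_def by simp
qed

lemma arith_core:
  fixes a b o1 i1 o2 i2 :: nat
  assumes "a > 0" "o1 \<ge> a" "i1 \<ge> a" "o1 + i1 \<ge> 2*a + 1"
    "o1 + o2 \<le> a + b" "i1 + i2 \<le> a + b" "b*(o1+i1) \<le> a*(o2+i2)"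
  shows False
proof -
  define s where "s = o1 + i1"
  have t: "o2 + i2 \<le> 2*(a+b) - s" using assms(5,6) unfolding s_def by arith
  have "b * s \<le> a * (2*(a+b) - s)" using assms(7) mult_le_mono2[OF t, of a] unfolding s_def by linarith
  moreover have "s \<le> 2*(a+b)" using assms(5,6) unfolding s_def by arith
  hence "a*s \<le> a*(2*(a+b))" by (rule mult_le_mono2)
  moreover have "a * (2*(a+b) - s) = a*(2*(a+b)) - a*s" by (rule diff_mult_distrib2)
  ultimately have "b*s + a*s \<le> a*(2*(a+b))" by linarith
  hence "(a+b)*s \<le> (a+b)*(2*a)" by (simp add: algebra_simps)
  hence "s \<le> 2*a" using assms(1) by simp
  thus False using assms(4) unfolding s_def by simp
qed

lemma move:
  assumes d: "digraph V A" and U: "X \<union> Y = V" "X \<inter> Y = {}" and v: "v \<in> X"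
    and a: "a > 0" and D: "Delta_max V A \<le> a + b"
    and N: "b * card (induced_arcs A X) + a * card (induced_arcs A Y)
       \<le> b * card (induced_arcs A (X - {v})) + a * card (induced_arcs A (insert v Y))"
  shows "d_min (induced_arcs A X) v < a \<or>
     (out_deg (induced_arcs A X) v = a \<and> in_deg (induced_arcs A X) v = a)"
proof (rule ccontr)
  assume H: "\<not> ?thesis"
  define o1 where "o1 = out_deg (induced_arcs A X) v"
  define i1 where "i1 = in_deg (induced_arcs A X) v"
  define o2 where "o2 = out_deg (induced_arcs A (insert v Y)) v"
  define i2 where "i2 = in_deg (induced_arcs A (insert v Y)) v"
  have vY: "v \<notin> Y" using U v by auto
  have c1: "card (induced_arcs A X) = card (induced_arcs A (X - {v})) + o1 + i1"
    unfolding o1_def i1_def using card_split[OF d v] .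
  have c2: "card (induced_arcs A (insert v Y)) = card (induced_arcs A Y) + o2 + i2"
    unfolding o2_def i2_def using card_split[OF d, of v "insert v Y"] vY by simp
  have vV: "v \<in> V" using U v by auto
  have b1: "o1 + o2 \<le> a + b" using deg_bound(1)[OF d vV U(2) vY] D unfolding o1_def o2_def by simp
  have b2: "i1 + i2 \<le> a + b" using deg_bound(2)[OF d vV U(2) vY] D unfolding i1_def i2_def by simp
  have h1: "o1 \<ge> a" "i1 \<ge> a" "o1 + i1 \<ge> 2*a+1" using H unfolding o1_def i1_def d_min_def by auto
  have "b * (o1 + i1) \<le> a * (o2 + i2)" using N c1 c2 by (simp add: algebra_simps)
  thus False using arith_core[OF a h1 b1 b2] by simp
qed

theorem mainTheorem7:
  fixes V :: "'a set" and A :: "('a \<times> 'a) set" and r1 r2 :: nat and V1 V2 :: "'a set"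
  assumes "digraph V A"
    and "r1 > 0" and "r2 > 0"
    and "Delta_max V A \<ge> 1" and "r1 + r2 \<ge> Delta_max V A"
    and "normal_partition r1 r2 V A V1 V2"
  shows "r_special r1 V1 (induced_arcs A V1) \<and> r_special r2 V2 (induced_arcs A V2)"
proof -
  have P: "V1 \<union> V2 = V" "V1 \<inter> V2 = {}" and
    N: "\<And>U1 U2. U1 \<union> U2 = V \<Longrightarrow> U1 \<inter> U2 = {} \<Longrightarrow>
        r2 * card (induced_arcs A V1) + r1 * card (induced_arcs A V2)
        \<le> r2 * card (induced_arcs A U1) + r1 * card (induced_arcs A U2)"
    using assms(6) unfolding normal_partition_def by auto
  have "r_special r1 V1 (induced_arcs A V1)"
    unfolding r_special_def
  proof
    fix v assume v: "v \<in> V1"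
    have "V1 - {v} \<union> insert v V2 = V" "(V1 - {v}) \<inter> insert v V2 = {}" using P v by auto
    from N[OF this] show "d_min (induced_arcs A V1) v < r1 \<or>
      (out_deg (induced_arcs A V1) v = r1 \<and> in_deg (induced_arcs A V1) v = r1)"
      by (intro move[OF assms(1) P v assms(2) assms(5)])
  qed
  moreover have "r_special r2 V2 (induced_arcs A V2)"
    unfolding r_special_def
  proof
    fix v assume v: "v \<in> V2"
    have P': "V2 \<union> V1 = V" "V2 \<inter> V1 = {}" using P by auto
    have "insert v V1 \<union> (V2 - {v}) = V" "insert v V1 \<inter> (V2 - {v}) = {}" using P v by auto
    from N[OF this] have "r1 * card (induced_arcs A V2) + r2 * card (induced_arcs A V1)
       \<le> r1 * card (induced_arcs A (V2 - {v})) + r2 * card (induced_arcs A (insert v V1))" by simp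
    thus "d_min (induced_arcs A V2) v < r2 \<or>
      (out_deg (induced_arcs A V2) v = r2 \<and> in_deg (induced_arcs A V2) v = r2)"
      using assms(5) by (intro move[OF assms(1) P' v assms(3)]) auto
  qed
  ultimately show ?thesis ..
qed

end
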